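(* Let $(\Re,\oplus,\circ)$ be a commutative Krasner hyperring with identity $1\neq0$, let $\phi$ be a hyperideal reduction and $\delta$ a hyperideal expansion on $L(\Re)$, and let $N$ be a proper hyperideal of $\Re$. Then the following are equivalent: (i) $N$ is a $\phi$-$\delta$-primary hyperideal; (ii) for each $a\in\Re-\delta(N)$, $(N:a)=N\cup(\phi(N):a)$; (iii) for each $a\in\Re-\delta(N)$, $(N:a)=N$ or $(N:a)=(\phi(N):a)$; (iv) for all hyperideals $K,L$ of $\Re$, $K\circ L\subseteq N$ and $K\circ L\not\subseteq\phi(N)$ imply $K\subseteq N$ or $L\subseteq\delta(N)$; (v) for each hyperideal $M$ of $\Re$ with $M\not\subseteq\delta(N)$, $(N:M)=N$ or $(N:M)=(\phi(N):M)$.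
   Context: A commutative Krasner hyperring with identity is $(\Re,\oplus,\circ)$ where $(\Re,\oplus)$ is a canonical hypergroup (associative commutative hyperoperation, scalar zero $0$ with $a\oplus0=\{a\}$, unique inverses $-a$ with $0\in a\oplus(-a)$, and $c\in a\oplus b\Rightarrow b\in c\oplus(-a),\ a\in c\oplus(-b)$), $(\Re,\circ)$ is a commutative semigroup with identity $1\ne0$ and $a\circ0=0$, and $\circ$ distributes over $\oplus$. Hyperideals: nonempty $N$ with $a\oplus(-b)\subseteq N$, $r\circ a\in N$ for $a,b\in N$, $r\in\Re$; $L(\Re)$ is the set of hyperideals. A hyperideal reduction is a map $\phi:L(\Re)\to L(\Re)\cup\{\emptyset\}$ with $\phi(N)\subseteq N$ and $N\subseteq M\Rightarrow\phi(N)\subseteq\phi(M)$. A hyperideal expansion is a map $\delta:L(\Re)\to L(\Re)$ with $N\subseteq\delta(N)$ and $N\subseteq M\Rightarrow\delta(N)\subseteq\delta(M)$. For $I\in L(\Re)\cup\{\emptyset\}$, $a\in\Re$ and a hyperideal $M$: $(I:a)=\{x: x\circ a\in I\}$, $(I:M)=\{x: x\circ m\in I\ \forall m\in M\}$. $K\circ L$ is the hyperideal generated by $\{k\circ l\}$. A proper hyperideal $N$ is $\phi$-$\delta$-primary if for all $a,b\in\Re$, $a\circ b\in N$ and $a\circ b\notin\phi(N)$ imply $a\in N$ or $b\in\delta(N)$. *)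

theory Defs
  imports Main
begin

definition canonical_hypergroup ::
  "('a \<Rightarrow> 'a \<Rightarrow> 'a set) \<Rightarrow> 'a \<Rightarrow> ('a \<Rightarrow> 'a) \<Rightarrow> bool" where
  "canonical_hypergroup hadd zero neg \<longleftrightarrow>
     (\<forall>a b. hadd a b \<noteq> {}) \<and>
     (\<forall>a b c. (\<Union>x\<in>hadd a b. hadd x c) = (\<Union>y\<in>hadd b c. hadd a y)) \<and>
     (\<forall>a b. hadd a b = hadd b a) \<and>
     (\<forall>a. hadd a zero = {a}) \<and>
     (\<forall>a. zero \<in> hadd a (neg a)) \<and>
     (\<forall>a b. zero \<in> hadd a b \<longrightarrow> b = neg a) \<and>
     (\<forall>a b c. c \<in> hadd a b \<longrightarrow> b \<in> hadd c (neg a) \<and> a \<in> hadd c (neg b))"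

definition krasner_hyperring ::
  "('a \<Rightarrow> 'a \<Rightarrow> 'a set) \<Rightarrow> ('a \<Rightarrow> 'a \<Rightarrow> 'a) \<Rightarrow> 'a \<Rightarrow> 'a \<Rightarrow> ('a \<Rightarrow> 'a) \<Rightarrow> bool" where
  "krasner_hyperring hadd mul zero one neg \<longleftrightarrow>
     canonical_hypergroup hadd zero neg \<and>
     (\<forall>a b c. mul (mul a b) c = mul a (mul b c)) \<and>
     (\<forall>a b. mul a b = mul b a) \<and>
     (\<forall>a. mul a one = a) \<and>
     one \<noteq> zero \<and>
     (\<forall>a. mul a zero = zero) \<and>
     (\<forall>a b c. (\<lambda>x. mul a x) ` hadd b c = hadd (mul a b) (mul a c))"

definition hyperideal ::
  "('a \<Rightarrow> 'a \<Rightarrow> 'a set) \<Rightarrow> ('a \<Rightarrow> 'a \<Rightarrow> 'a) \<Rightarrow> ('a \<Rightarrow> 'a) \<Rightarrow> 'a set \<Rightarrow> bool" where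
  "hyperideal hadd mul neg N \<longleftrightarrow>
     N \<noteq> {} \<and> (\<forall>a\<in>N. \<forall>b\<in>N. hadd a (neg b) \<subseteq> N) \<and> (\<forall>r. \<forall>a\<in>N. mul r a \<in> N)"

definition hgen ::
  "('a \<Rightarrow> 'a \<Rightarrow> 'a set) \<Rightarrow> ('a \<Rightarrow> 'a \<Rightarrow> 'a) \<Rightarrow> ('a \<Rightarrow> 'a) \<Rightarrow> 'a set \<Rightarrow> 'a set" where
  "hgen hadd mul neg S = \<Inter>{I. hyperideal hadd mul neg I \<and> S \<subseteq> I}"

definition hprod ::
  "('a \<Rightarrow> 'a \<Rightarrow> 'a set) \<Rightarrow> ('a \<Rightarrow> 'a \<Rightarrow> 'a) \<Rightarrow> ('a \<Rightarrow> 'a) \<Rightarrow> 'a set \<Rightarrow> 'a set \<Rightarrow> 'a set" where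
  "hprod hadd mul neg K L = hgen hadd mul neg {mul k l | k l. k \<in> K \<and> l \<in> L}"

definition hreduction ::
  "('a \<Rightarrow> 'a \<Rightarrow> 'a set) \<Rightarrow> ('a \<Rightarrow> 'a \<Rightarrow> 'a) \<Rightarrow> ('a \<Rightarrow> 'a) \<Rightarrow> ('a set \<Rightarrow> 'a set) \<Rightarrow> bool" where
  "hreduction hadd mul neg \<phi> \<longleftrightarrow>
     (\<forall>N. hyperideal hadd mul neg N \<longrightarrow>
        (hyperideal hadd mul neg (\<phi> N) \<or> \<phi> N = {}) \<and> \<phi> N \<subseteq> N) \<and>
     (\<forall>N M. hyperideal hadd mul neg N \<longrightarrow> hyperideal hadd mul neg M \<longrightarrow> N \<subseteq> M \<longrightarrow> \<phi> N \<subseteq> \<phi> M)"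

definition hexpansion ::
  "('a \<Rightarrow> 'a \<Rightarrow> 'a set) \<Rightarrow> ('a \<Rightarrow> 'a \<Rightarrow> 'a) \<Rightarrow> ('a \<Rightarrow> 'a) \<Rightarrow> ('a set \<Rightarrow> 'a set) \<Rightarrow> bool" where
  "hexpansion hadd mul neg \<delta> \<longleftrightarrow>
     (\<forall>N. hyperideal hadd mul neg N \<longrightarrow>
        hyperideal hadd mul neg (\<delta> N) \<and> N \<subseteq> \<delta> N) \<and>
     (\<forall>N M. hyperideal hadd mul neg N \<longrightarrow> hyperideal hadd mul neg M \<longrightarrow> N \<subseteq> M \<longrightarrow> \<delta> N \<subseteq> \<delta> M)"

definition colon_elem :: "('a \<Rightarrow> 'a \<Rightarrow> 'a) \<Rightarrow> 'a set \<Rightarrow> 'a \<Rightarrow> 'a set" where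
  "colon_elem mul I a = {x. mul x a \<in> I}"

definition colon_set :: "('a \<Rightarrow> 'a \<Rightarrow> 'a) \<Rightarrow> 'a set \<Rightarrow> 'a set \<Rightarrow> 'a set" where
  "colon_set mul I M = {x. \<forall>m\<in>M. mul x m \<in> I}"

definition phi_delta_primary ::
  "('a \<Rightarrow> 'a \<Rightarrow> 'a set) \<Rightarrow> ('a \<Rightarrow> 'a \<Rightarrow> 'a) \<Rightarrow> ('a \<Rightarrow> 'a) \<Rightarrow>
   ('a set \<Rightarrow> 'a set) \<Rightarrow> ('a set \<Rightarrow> 'a set) \<Rightarrow> 'a set \<Rightarrow> bool" where
  "phi_delta_primary hadd mul neg \<phi> \<delta> N \<longleftrightarrow>
     hyperideal hadd mul neg N \<and> N \<noteq> UNIV \<and>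
     (\<forall>a b. mul a b \<in> N \<and> mul a b \<notin> \<phi> N \<longrightarrow> a \<in> N \<or> b \<in> \<delta> N)"

end

theory Submission
  imports Defs
begin

locale kh =
  fixes hadd :: "'a \<Rightarrow> 'a \<Rightarrow> 'a set" and mul :: "'a \<Rightarrow> 'a \<Rightarrow> 'a"
    and zero one :: 'a and neg :: "'a \<Rightarrow> 'a"
  assumes KH: "krasner_hyperring hadd mul zero one neg"
begin

lemma CH: "canonical_hypergroup hadd zero neg"
  using KH unfolding krasner_hyperring_def by (elim conjE)

lemma CHc: "(\<forall>a b. hadd a b \<noteq> {})" "(\<forall>a b. hadd a b = hadd b a)" "(\<forall>a. hadd a zero = {a})"
  "(\<forall>a. zero \<in> hadd a (neg a))" "(\<forall>a b. zero \<in> hadd a b \<longrightarrow> b = neg a)"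
  "(\<forall>a b c. c \<in> hadd a b \<longrightarrow> b \<in> hadd c (neg a) \<and> a \<in> hadd c (neg b))"
  using CH unfolding canonical_hypergroup_def by simp_all

lemma ne: "hadd a b \<noteq> {}" using CHc(1) by simp
lemma acomm: "hadd a b = hadd b a" using CHc(2) by simp
lemma azero: "hadd a zero = {a}" using CHc(3) by simp
lemma azero2: "hadd zero a = {a}" using azero[of a] acomm[of a zero] by simp
lemma ainv: "zero \<in> hadd a (neg a)" using CHc(4) by simp
lemma auniq: "zero \<in> hadd a b \<Longrightarrow> b = neg a" using CHc(5) by simp
lemma arev: "c \<in> hadd a b \<Longrightarrow> b \<in> hadd c (neg a) \<and> a \<in> hadd c (neg b)"
  using CHc(6) by simp
lemma negneg: "neg (neg a) = a"
proof -
  have "zero \<in> hadd (neg a) a" using ainv[of a] acomm[of a "neg a"] by simp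
  then show ?thesis using auniq[of "neg a" a] by simp
qed

lemma KHc: "(\<forall>a b c. mul (mul a b) c = mul a (mul b c))" "(\<forall>a b. mul a b = mul b a)"
  "(\<forall>a. mul a one = a)" "(\<forall>a. mul a zero = zero)"
  "(\<forall>a b c. (\<lambda>x. mul a x) ` hadd b c = hadd (mul a b) (mul a c))"
  using KH unfolding krasner_hyperring_def by (metis (no_types))+

lemma mcomm: "mul a b = mul b a" using KHc(2) by simp
lemma massoc: "mul (mul a b) c = mul a (mul b c)" using KHc(1) by simp
lemma mlcomm: "mul a (mul b c) = mul b (mul a c)"
proof -
  have "mul a (mul b c) = mul (mul a b) c" using massoc[of a b c] by simp
  also have "\<dots> = mul (mul b a) c" using mcomm[of a b] by simp
  finally show ?thesis using massoc[of b a c] by simp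
qed
lemma mone: "mul a one = a" using KHc(3) by simp
lemma mzero: "mul a zero = zero" using KHc(4) by simp
lemma distr: "(\<lambda>x. mul a x) ` hadd b c = hadd (mul a b) (mul a c)"
  using KHc(5) by simp

lemma distr_in: "z \<in> hadd x y \<Longrightarrow> mul a z \<in> hadd (mul a x) (mul a y)"
  using distr by blast

lemma mneg: "mul a (neg b) = neg (mul a b)"
proof -
  have "mul a zero \<in> hadd (mul a b) (mul a (neg b))" using distr_in ainv by blast
  then show ?thesis using mzero[of a] auniq[of "mul a b" "mul a (neg b)"] by simp
qed

context
  fixes I assumes I: "hyperideal hadd mul neg I"
begin
lemma i_mul: "a \<in> I \<Longrightarrow> mul r a \<in> I" using I unfolding hyperideal_def by blast
lemma i_mul2: "a \<in> I \<Longrightarrow> mul a r \<in> I" using i_mul mcomm by metis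
lemma i_zero: "zero \<in> I"
proof -
  obtain a where "a \<in> I" using I unfolding hyperideal_def by blast
  then show ?thesis using i_mul mzero mcomm by metis
qed
lemma i_sub: "a \<in> I \<Longrightarrow> b \<in> I \<Longrightarrow> z \<in> hadd a (neg b) \<Longrightarrow> z \<in> I"
  using I unfolding hyperideal_def by blast
lemma i_neg: "a \<in> I \<Longrightarrow> neg a \<in> I"
  using i_sub[of zero a "neg a"] i_zero azero2 by blast
lemma i_add: "a \<in> I \<Longrightarrow> b \<in> I \<Longrightarrow> z \<in> hadd a b \<Longrightarrow> z \<in> I"
  using i_sub[of a "neg b" z] i_neg negneg by metis
end

lemma union_lemma:
  assumes A: "hyperideal hadd mul neg A" and B: "hyperideal hadd mul neg B"
    and C: "hyperideal hadd mul neg (A \<union> B)"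
  shows "A \<subseteq> B \<or> B \<subseteq> A"
proof (rule ccontr)
  assume "\<not> ?thesis"
  then obtain x y where x: "x \<in> A" "x \<notin> B" and y: "y \<in> B" "y \<notin> A" by blast
  obtain z where z: "z \<in> hadd x y" using ne by blast
  have "z \<in> A \<union> B" using i_add[OF C, of x y z] x y z by blast
  moreover have "z \<in> A \<Longrightarrow> False"
  proof -
    assume "z \<in> A"
    have "y \<in> hadd z (neg x)" using arev z by blast
    then show False using i_sub[OF A] x \<open>z \<in> A\<close> y by blast
  qed
  moreover have "z \<in> B \<Longrightarrow> False"
  proof -
    assume "z \<in> B"
    have "x \<in> hadd z (neg y)" using arev z by blast
    then show False using i_sub[OF B] y \<open>z \<in> B\<close> x by blast
  qed
  ultimately show False by blast
qed

lemma colon_hyp: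
  assumes I: "hyperideal hadd mul neg I"
  shows "hyperideal hadd mul neg (colon_elem mul I a)"
  unfolding hyperideal_def colon_elem_def
proof (intro conjI ballI allI subsetI)
  show "{x. mul x a \<in> I} \<noteq> {}" using i_zero[OF I] mzero mcomm by (metis empty_iff mem_Collect_eq)
next
  fix x y z assume x: "x \<in> {x. mul x a \<in> I}" and y: "y \<in> {x. mul x a \<in> I}"
    and z: "z \<in> hadd x (neg y)"
  have "mul a z \<in> hadd (mul a x) (neg (mul a y))" using distr_in[OF z] mneg by metis
  then have "mul a z \<in> I" using i_sub[OF I] x y mcomm by (metis mem_Collect_eq)
  then show "z \<in> {x. mul x a \<in> I}" using mcomm by simp
next
  fix r x assume "x \<in> {x. mul x a \<in> I}"
  then show "mul r x \<in> {x. mul x a \<in> I}" using i_mul[OF I] massoc by auto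
qed

lemma colon_empty: "colon_elem mul {} a = {}" unfolding colon_elem_def by auto

lemma principal_hyp: "hyperideal hadd mul neg (range (\<lambda>r. mul r b))"
proof -
  have c2: "z \<in> range (\<lambda>r. mul r b)" if x: "x \<in> range (\<lambda>r. mul r b)" and y: "y \<in> range (\<lambda>r. mul r b)"
    and z: "z \<in> hadd x (neg y)" for x y z
  proof -
    obtain r s where "x = mul b r" "y = mul b s" using x y mcomm by auto
    then have "z \<in> hadd (mul b r) (mul b (neg s))" using z mneg by simp
    then have "z \<in> (\<lambda>x. mul b x) ` hadd r (neg s)" using distr[of b r "neg s"] by simp
    then obtain w where "z = mul b w" by blast
    then show ?thesis using mcomm by auto
  qed
  have c3: "mul r x \<in> range (\<lambda>r. mul r b)" if xr: "x \<in> range (\<lambda>r. mul r b)" for r x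
  proof -
    obtain t where "x = mul t b" using xr by blast
    then have "mul r x = mul (mul r t) b" using massoc by simp
    then show ?thesis by blast
  qed
  show ?thesis unfolding hyperideal_def using c2 c3 by blast
qed

lemma spread:
  assumes M: "hyperideal hadd mul neg M" and D: "hyperideal hadd mul neg D"
    and P: "hyperideal hadd mul neg P \<or> P = {}"
    and b: "b \<in> M" "b \<notin> D"
    and H: "\<forall>m\<in>M. m \<notin> D \<longrightarrow> mul y m \<in> P"
    and m: "m \<in> M"
  shows "mul y m \<in> P"
proof (cases "m \<in> D")
  case False then show ?thesis using H m by blast
next
  case True
  have yb: "mul y b \<in> P" using H b by blast
  then have P': "hyperideal hadd mul neg P" using P by blast
  obtain z where z: "z \<in> hadd m b" using ne by blast
  have zM: "z \<in> M" using i_add[OF M] z m b by blast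
  have "b \<in> hadd z (neg m)" using arev z by blast
  then have zD: "z \<notin> D" using i_sub[OF D] True b by blast
  have yz: "mul y z \<in> P" using H zM zD by blast
  have "m \<in> hadd z (neg b)" using arev z by blast
  then have "mul y m \<in> hadd (mul y z) (neg (mul y b))" using distr_in mneg by metis
  then show ?thesis using i_sub[OF P'] yz yb by blast
qed

end

theorem mainTheorem3:
  fixes hadd :: "'a \<Rightarrow> 'a \<Rightarrow> 'a set" and mul :: "'a \<Rightarrow> 'a \<Rightarrow> 'a"
    and zero one :: 'a and neg :: "'a \<Rightarrow> 'a"
    and \<phi> \<delta> :: "'a set \<Rightarrow> 'a set" and N :: "'a set"
  assumes "krasner_hyperring hadd mul zero one neg"
    and "hreduction hadd mul neg \<phi>"
    and "hexpansion hadd mul neg \<delta>"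
    and "hyperideal hadd mul neg N" and "N \<noteq> UNIV"
  shows "(phi_delta_primary hadd mul neg \<phi> \<delta> N \<longleftrightarrow>
            (\<forall>a. a \<notin> \<delta> N \<longrightarrow> colon_elem mul N a = N \<union> colon_elem mul (\<phi> N) a))
       \<and> (phi_delta_primary hadd mul neg \<phi> \<delta> N \<longleftrightarrow>
            (\<forall>a. a \<notin> \<delta> N \<longrightarrow> colon_elem mul N a = N \<or> colon_elem mul N a = colon_elem mul (\<phi> N) a))
       \<and> (phi_delta_primary hadd mul neg \<phi> \<delta> N \<longleftrightarrow>
            (\<forall>K L. hyperideal hadd mul neg K \<longrightarrow> hyperideal hadd mul neg L \<longrightarrow>
               hprod hadd mul neg K L \<subseteq> N \<longrightarrow> \<not> hprod hadd mul neg K L \<subseteq> \<phi> N \<longrightarrow>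
               K \<subseteq> N \<or> L \<subseteq> \<delta> N))
       \<and> (phi_delta_primary hadd mul neg \<phi> \<delta> N \<longleftrightarrow>
            (\<forall>M. hyperideal hadd mul neg M \<longrightarrow> \<not> M \<subseteq> \<delta> N \<longrightarrow>
               colon_set mul N M = N \<or> colon_set mul N M = colon_set mul (\<phi> N) M))"
proof -
  interpret kh hadd mul zero one neg using assms(1) by unfold_locales
  have NI: "hyperideal hadd mul neg N" by fact
  have PN: "hyperideal hadd mul neg (\<phi> N) \<or> \<phi> N = {}" and PsN: "\<phi> N \<subseteq> N"
    using assms(2) NI unfolding hreduction_def by blast+
  have DN: "hyperideal hadd mul neg (\<delta> N)" and NsD: "N \<subseteq> \<delta> N"
    using assms(3) NI unfolding hexpansion_def by blast+
  let ?P = "phi_delta_primary hadd mul neg \<phi> \<delta> N"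
  let ?ii = "\<forall>a. a \<notin> \<delta> N \<longrightarrow> colon_elem mul N a = N \<union> colon_elem mul (\<phi> N) a"
  let ?iii = "\<forall>a. a \<notin> \<delta> N \<longrightarrow> colon_elem mul N a = N \<or> colon_elem mul N a = colon_elem mul (\<phi> N) a"
  let ?iv = "\<forall>K L. hyperideal hadd mul neg K \<longrightarrow> hyperideal hadd mul neg L \<longrightarrow>
               hprod hadd mul neg K L \<subseteq> N \<longrightarrow> \<not> hprod hadd mul neg K L \<subseteq> \<phi> N \<longrightarrow>
               K \<subseteq> N \<or> L \<subseteq> \<delta> N"
  let ?v = "\<forall>M. hyperideal hadd mul neg M \<longrightarrow> \<not> M \<subseteq> \<delta> N \<longrightarrow>
               colon_set mul N M = N \<or> colon_set mul N M = colon_set mul (\<phi> N) M"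
  have Psub: "colon_elem mul (\<phi> N) a \<subseteq> colon_elem mul N a" for a
    using PsN unfolding colon_elem_def by auto
  have Nsub: "N \<subseteq> colon_elem mul N a" for a
    using i_mul2[OF NI] unfolding colon_elem_def by auto
  have i_ii: "?P \<Longrightarrow> ?ii"
  proof (intro allI impI)
    fix a assume P: ?P and a: "a \<notin> \<delta> N"
    show "colon_elem mul N a = N \<union> colon_elem mul (\<phi> N) a"
    proof
      show "colon_elem mul N a \<subseteq> N \<union> colon_elem mul (\<phi> N) a"
        using P a unfolding phi_delta_primary_def colon_elem_def by auto
      show "N \<union> colon_elem mul (\<phi> N) a \<subseteq> colon_elem mul N a" using Psub Nsub by blast
    qed
  qed
  have ii_iii: "?ii \<Longrightarrow> ?iii"
  proof (intro allI impI)
    fix a assume ii: ?ii and a: "a \<notin> \<delta> N"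
    have eq: "colon_elem mul N a = N \<union> colon_elem mul (\<phi> N) a" using ii a by blast
    show "colon_elem mul N a = N \<or> colon_elem mul N a = colon_elem mul (\<phi> N) a"
    proof (cases "\<phi> N = {}")
      case True then show ?thesis using eq colon_empty by simp
    next
      case False
      then have "hyperideal hadd mul neg (colon_elem mul (\<phi> N) a)" using PN colon_hyp by blast
      moreover have "hyperideal hadd mul neg (N \<union> colon_elem mul (\<phi> N) a)"
        using colon_hyp[OF NI, of a] eq by simp
      ultimately show ?thesis using union_lemma[OF NI] eq by blast
    qed
  qed
  have iii_i: "?iii \<Longrightarrow> ?P"
    unfolding phi_delta_primary_def
  proof (intro conjI allI impI NI assms(5))
    fix a b assume iii: ?iii and ab: "mul a b \<in> N \<and> mul a b \<notin> \<phi> N"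
    show "a \<in> N \<or> b \<in> \<delta> N"
    proof (rule ccontr)
      assume c: "\<not> ?thesis"
      have "a \<in> colon_elem mul N b" "a \<notin> colon_elem mul (\<phi> N) b"
        using ab unfolding colon_elem_def by auto
      then show False using iii c by blast
    qed
  qed
  have i_iii: "?P \<Longrightarrow> ?iii" using i_ii ii_iii by blast
  have i_iv: "?P \<Longrightarrow> ?iv"
  proof (intro allI impI)
    fix K L assume P: ?P and K: "hyperideal hadd mul neg K" and L: "hyperideal hadd mul neg L"
      and sN: "hprod hadd mul neg K L \<subseteq> N" and nsP: "\<not> hprod hadd mul neg K L \<subseteq> \<phi> N"
    let ?S = "{mul k l | k l. k \<in> K \<and> l \<in> L}"
    have Sh: "?S \<subseteq> hprod hadd mul neg K L" unfolding hprod_def hgen_def by blast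
    have ex: "\<exists>k\<in>K. \<exists>l\<in>L. mul k l \<notin> \<phi> N"
    proof (rule ccontr)
      assume nt: "\<not> ?thesis"
      then have "?S \<subseteq> \<phi> N" by blast
      moreover have "\<phi> N \<noteq> {}"
        using K L nt unfolding hyperideal_def by blast
      ultimately have "hprod hadd mul neg K L \<subseteq> \<phi> N" using PN
        unfolding hprod_def hgen_def by blast
      then show False using nsP by blast
    qed
    show "K \<subseteq> N \<or> L \<subseteq> \<delta> N"
    proof (rule ccontr)
      assume c: "\<not> ?thesis"
      then obtain x b where x: "x \<in> K" "x \<notin> N" and b: "b \<in> L" "b \<notin> \<delta> N" by blast
      have H: "\<forall>m\<in>L. m \<notin> \<delta> N \<longrightarrow> mul k m \<in> \<phi> N" if k: "k \<in> K" for k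
      proof (intro ballI impI)
        fix m assume m: "m \<in> L" "m \<notin> \<delta> N"
        have "mul x m \<in> N" using Sh sN x m by blast
        then have "x \<in> colon_elem mul N m" unfolding colon_elem_def by simp
        then have eq: "colon_elem mul N m = colon_elem mul (\<phi> N) m" using i_iii[OF P, rule_format, of m] m x by blast
        have "mul k m \<in> N" using Sh sN k m by blast
        then show "mul k m \<in> \<phi> N" using eq unfolding colon_elem_def by blast
      qed
      have "mul k l \<in> \<phi> N" if "k \<in> K" "l \<in> L" for k l
        using spread[OF L DN PN b H[OF that(1)] that(2)] .
      then show False using ex by blast
    qed
  qed
  have iv_i: "?iv \<Longrightarrow> ?P"
    unfolding phi_delta_primary_def
  proof (intro conjI allI impI NI assms(5))
    fix a b assume iv: ?iv and ab: "mul a b \<in> N \<and> mul a b \<notin> \<phi> N"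
    let ?K = "range (\<lambda>r. mul r a)" and ?L = "range (\<lambda>r. mul r b)"
    have "{mul k l | k l. k \<in> ?K \<and> l \<in> ?L} \<subseteq> N"
    proof
      fix z assume "z \<in> {mul k l | k l. k \<in> ?K \<and> l \<in> ?L}"
      then obtain r s where "z = mul (mul r a) (mul s b)" by blast
      also have "\<dots> = mul (mul r s) (mul a b)" by (simp add: massoc mcomm mlcomm)
      finally show "z \<in> N" using i_mul[OF NI] ab by simp
    qed
    then have s1: "hprod hadd mul neg ?K ?L \<subseteq> N" using NI unfolding hprod_def hgen_def by blast
    have aK: "a \<in> ?K" using mone[of a] mcomm[of a one] by (metis rangeI)
    have bL: "b \<in> ?L" using mone[of b] mcomm[of b one] by (metis rangeI)
    have "mul a b \<in> {mul k l | k l. k \<in> ?K \<and> l \<in> ?L}"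
      using aK bL by blast
    then have "mul a b \<in> hprod hadd mul neg ?K ?L" unfolding hprod_def hgen_def by blast
    then have s2: "\<not> hprod hadd mul neg ?K ?L \<subseteq> \<phi> N" using ab by blast
    have "?K \<subseteq> N \<or> ?L \<subseteq> \<delta> N" using iv[rule_format, OF principal_hyp principal_hyp s1 s2] .
    then show "a \<in> N \<or> b \<in> \<delta> N" using aK bL by blast
  qed
  have i_v: "?P \<Longrightarrow> ?v"
  proof (intro allI impI)
    fix M assume P: ?P and M: "hyperideal hadd mul neg M" and nM: "\<not> M \<subseteq> \<delta> N"
    then obtain b where b: "b \<in> M" "b \<notin> \<delta> N" by blast
    show "colon_set mul N M = N \<or> colon_set mul N M = colon_set mul (\<phi> N) M"
    proof (cases "colon_set mul N M = N")
      case True then show ?thesis by blast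
    next
      case False
      have "N \<subseteq> colon_set mul N M" using i_mul2[OF NI] unfolding colon_set_def by auto
      then obtain x where x: "x \<in> colon_set mul N M" "x \<notin> N" using False by blast
      have "colon_set mul N M \<subseteq> colon_set mul (\<phi> N) M"
      proof
        fix y assume y: "y \<in> colon_set mul N M"
        have H: "\<forall>m\<in>M. m \<notin> \<delta> N \<longrightarrow> mul y m \<in> \<phi> N"
        proof (intro ballI impI)
          fix m assume m: "m \<in> M" "m \<notin> \<delta> N"
          have "x \<in> colon_elem mul N m" using x m unfolding colon_set_def colon_elem_def by simp
          then have eq: "colon_elem mul N m = colon_elem mul (\<phi> N) m" using i_iii[OF P, rule_format, of m] m x by blast
          have "mul y m \<in> N" using y m unfolding colon_set_def by simp
          then show "mul y m \<in> \<phi> N" using eq unfolding colon_elem_def by blast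
        qed
        show "y \<in> colon_set mul (\<phi> N) M"
          unfolding colon_set_def using spread[OF M DN PN b H] by blast
      qed
      moreover have "colon_set mul (\<phi> N) M \<subseteq> colon_set mul N M"
        using PsN unfolding colon_set_def by auto
      ultimately show ?thesis by blast
    qed
  qed
  have v_i: "?v \<Longrightarrow> ?P"
    unfolding phi_delta_primary_def
  proof (intro conjI allI impI NI assms(5))
    fix a b assume v: ?v and ab: "mul a b \<in> N \<and> mul a b \<notin> \<phi> N"
    show "a \<in> N \<or> b \<in> \<delta> N"
    proof (rule ccontr)
      assume c: "\<not> ?thesis"
      let ?M = "range (\<lambda>r. mul r b)"
      have bM: "b \<in> ?M" using mone[of b] mcomm[of b one] by (metis rangeI)
      have "a \<in> colon_set mul N ?M"
        unfolding colon_set_def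
      proof (intro CollectI ballI)
        fix m assume "m \<in> ?M"
        then obtain r where "m = mul r b" by blast
        then have "mul a m = mul r (mul a b)" by (simp add: massoc mcomm mlcomm)
        then show "mul a m \<in> N" using i_mul[OF NI] ab by simp
      qed
      moreover have "a \<notin> colon_set mul (\<phi> N) ?M" using bM ab unfolding colon_set_def by blast
      moreover have nM: "\<not> ?M \<subseteq> \<delta> N" using bM c by blast
      moreover have "colon_set mul N ?M = N \<or> colon_set mul N ?M = colon_set mul (\<phi> N) ?M"
        using v[rule_format, OF principal_hyp nM] .
      ultimately show False using c by blast
    qed
  qed
  have e1: "?P = ?ii" using i_ii ii_iii iii_i by (intro iffI) blast+
  have e2: "?P = ?iii" using i_iii iii_i by (intro iffI) blast+
  have e3: "?P = ?iv" using i_iv iv_i by (intro iffI) blast+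
  have e4: "?P = ?v" using i_v v_i by (intro iffI) blast+
  show ?thesis using e1 e2 e3 e4 by (intro conjI)
qed

end
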